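(* Suppose $0<a<b$, $c>1$ and $0<\alpha<\alpha_c$. For all real $k\ne0$, with $\xi=k+i\alpha$: (1) $k\,\operatorname{Im}\hat S(\xi)<0$; (2) $\sqrt{a/b}<|\hat S(\xi)|<\hat S(i\alpha)=\sqrt{\frac{1-a\alpha^2}{1-b\alpha^2}}<c$; (3) $|\hat S(\xi)|<1-\frac12\frac{(b-a)(k^2-\alpha^2)}{1+b(k^2-\alpha^2)}$; (4) $i\xi\hat S(\xi)=-\sqrt{-\xi^2\frac{1+a\xi^2}{1+b\xi^2}}$ (principal square root).
   Context: $\alpha_c=\sqrt{(c^2-1)/(bc^2-a)}$. $\hat S(\xi)=\sqrt{\frac{1+a\xi^2}{1+b\xi^2}}$ is the principal-branch square root, which is analytic on the strip $0\le\operatorname{Im}\xi\le\alpha$ when $\alpha<b^{-1/2}$ (there the ratio $\frac{1+a\xi^2}{1+b\xi^2}=\frac ab+(1-\frac ab)\frac1{1+b\xi^2}$ has positive real part). *)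

theory Defs
  imports Complex_Main
begin

definition Shat :: "real \<Rightarrow> real \<Rightarrow> complex \<Rightarrow> complex" where
  "Shat a b \<xi> = csqrt ((1 + of_real a * \<xi>\<^sup>2) / (1 + of_real b * \<xi>\<^sup>2))"

definition alpha_c :: "real \<Rightarrow> real \<Rightarrow> real \<Rightarrow> real" where
  "alpha_c a b c = sqrt ((c\<^sup>2 - 1) / (b * c\<^sup>2 - a))"

end

theory Submission
  imports Defs
begin

lemma aux3:
  fixes a b u D :: real
  assumes "D = 1 + b*u" "D \<noteq> 0" "b \<noteq> 0"
  shows "(1 + (a/b + (b-a)/(b*D)))/2 = 1 - (1/2)*((b-a)*u)/D"
proof -
  have "(1 + (a/b + (b-a)/(b*D)))/2 = (b*D + a*D + (b-a))/(2*b*D)"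
    using assms(2,3) by (simp add: field_simps)
  also have "\<dots> = (2*b*D - b*((b-a)*u))/(2*b*D)"
    unfolding assms(1) by (simp add: algebra_simps)
  also have "\<dots> = 1 - (1/2)*((b-a)*u)/D"
    using assms(2,3) by (simp add: field_simps)
  finally show ?thesis .
qed

theorem lemma3p1:
  fixes a b c \<alpha> k :: real
  assumes "0 < a" "a < b" "c > 1" "0 < \<alpha>" "\<alpha> < alpha_c a b c" "k \<noteq> 0"
  defines "\<xi> \<equiv> Complex k \<alpha>"
  shows "k * Im (Shat a b \<xi>) < 0 \<and>
         sqrt (a / b) < cmod (Shat a b \<xi>) \<and>
         cmod (Shat a b \<xi>) < sqrt ((1 - a * \<alpha>\<^sup>2) / (1 - b * \<alpha>\<^sup>2)) \<and>
         Shat a b (\<i> * of_real \<alpha>) = of_real (sqrt ((1 - a * \<alpha>\<^sup>2) / (1 - b * \<alpha>\<^sup>2))) \<and>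
         sqrt ((1 - a * \<alpha>\<^sup>2) / (1 - b * \<alpha>\<^sup>2)) < c \<and>
         cmod (Shat a b \<xi>) < 1 - (1/2) * ((b - a) * (k\<^sup>2 - \<alpha>\<^sup>2)) / (1 + b * (k\<^sup>2 - \<alpha>\<^sup>2)) \<and>
         \<i> * \<xi> * Shat a b \<xi> = - csqrt (- \<xi>\<^sup>2 * ((1 + of_real a * \<xi>\<^sup>2) / (1 + of_real b * \<xi>\<^sup>2)))"
proof -
  define s where "s = k^2"
  define t where "t = \<alpha>^2"
  define u where "u = s - t"
  define v where "v = 2*k*\<alpha>"
  have s0: "s > 0" using assms(6) unfolding s_def by simp
  have t0: "t > 0" using assms(4) unfolding t_def by simp
  have bc: "b*c^2 - a > 0"
  proof -
    have "c^2 > 1" using assms(3) by (simp add: one_less_power)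
    hence "b*c^2 > b*1" using assms(1,2) by (intro mult_strict_left_mono) auto
    thus ?thesis using assms(2) by simp
  qed
  have tQ: "t < (c^2 - 1) / (b*c^2 - a)"
  proof -
    have "\<alpha> < sqrt ((c^2 - 1) / (b*c^2 - a))" using assms(5) unfolding alpha_c_def .
    hence "\<alpha>^2 < (sqrt ((c^2 - 1) / (b*c^2 - a)))^2" using assms(4)
      by (intro power_strict_mono) auto
    also have "\<dots> = (c^2 - 1) / (b*c^2 - a)"
      using bc assms(3) by (intro real_sqrt_pow2) (auto simp: one_less_power less_imp_le)
    finally show ?thesis unfolding t_def .
  qed
  have tc: "t*(b*c^2 - a) < c^2 - 1" using tQ bc by (simp add: pos_less_divide_eq)
  have bt: "b*t < 1"
  proof -
    have "t*(b*c^2 - a) - (c^2 - 1) < 0" using tc by simp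
    hence "(1 - b*t)*c^2 - (1 - a*t) > 0" by (simp add: algebra_simps)
    moreover have "(1 - b*t)*c^2 - (1 - a*t) \<le> (1 - b*t) - (1 - a*t)" if "1 - b*t \<le> 0"
    proof -
      have "c^2 \<ge> 1" using assms(3) by (simp add: one_le_power less_imp_le)
      hence "(1 - b*t)*c^2 \<le> (1 - b*t)*1" using that by (intro mult_left_mono_neg) auto
      thus ?thesis by simp
    qed
    moreover have "(1 - b*t) - (1 - a*t) \<le> 0" using t0 assms(2) by (simp add: mult_right_mono)
    ultimately show ?thesis by linarith
  qed
  have at: "a*t < b*t" using t0 assms(2) by simp
  define L where "L = (1 - a*t)/(1 - b*t)"
  have L0: "L > 0" using bt at unfolding L_def by simp
  have Lc: "L < c^2"
  proof -
    have "1 - a*t < c^2*(1 - b*t)" using tc by (simp add: algebra_simps)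
    thus ?thesis using bt unfolding L_def by (simp add: divide_less_eq)
  qed
  have xi2: "\<xi>^2 = Complex u v"
    unfolding \<xi>_def u_def v_def s_def t_def by (simp add: power2_eq_square Complex_eq algebra_simps)
  define w where "w = 1 + of_real b * \<xi>^2"
  define z where "z = 1 + of_real a * \<xi>^2"
  have Rew: "Re w = 1 + b*u" and Imw: "Im w = b*v" unfolding w_def xi2 by simp_all
  have Rez: "Re z = 1 + a*u" and Imz: "Im z = a*v" unfolding z_def xi2 by simp_all
  have c0: "1 + b*u > 0"
  proof -
    have "b*u \<ge> -(b*t)" using s0 assms(1,2) unfolding u_def by (simp add: algebra_simps)
    thus ?thesis using bt by linarith
  qed
  have a0: "1 + a*u > 0"
  proof -
    have "a*u \<ge> -(a*t)" using s0 assms(1,2) unfolding u_def by (simp add: algebra_simps)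
    thus ?thesis using bt at by linarith
  qed
  have v0: "v \<noteq> 0" using assms(4,6) unfolding v_def by simp
  define N where "N = (1 + b*u)^2 + (b*v)^2"
  have N0: "N > (1+b*u)^2" unfolding N_def using v0 assms(1,2) by simp
  have Npos: "N > 0" using N0 by (metis le_less_trans zero_le_power2)
  define R where "R = z / w"
  define X where "X = ((1 + a*u)*(1 + b*u) + a*v*(b*v)) / N"
  define Y where "Y = (a*v*(1 + b*u) - (1 + a*u)*(b*v)) / N"
  have ReR: "Re R = X" unfolding R_def X_def N_def Re_divide Rew Imw Rez Imz ..
  have ImR: "Im R = Y" unfolding R_def Y_def N_def Im_divide Rew Imw Rez Imz ..
  have Y2: "Y = (a - b)*v / N" unfolding Y_def by (simp add: algebra_simps)
  have XN: "X*N = (1 + a*u)*(1 + b*u) + a*v*(b*v)" unfolding X_def using Npos by simp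
  have avbv: "a*v*(b*v) \<ge> 0"
  proof -
    have e: "a*v*(b*v) = (a*b)*(v*v)" by (simp add: algebra_simps)
    have "(a*b)*(v*v) \<ge> 0" using assms(1,2) by (simp add: mult_nonneg_nonneg)
    thus ?thesis unfolding e .
  qed
  have X0: "X > 0" unfolding X_def using a0 c0 Npos avbv
    by (intro divide_pos_pos add_pos_nonneg) auto
  define S where "S = csqrt R"
  have SS: "Shat a b \<xi> = S" unfolding Shat_def S_def R_def z_def w_def ..
  define p where "p = Re S"
  define q where "q = Im S"
  have "S^2 = R" unfolding S_def by simp
  hence pq1: "p^2 - q^2 = X" and pq2: "2*p*q = Y"
    using ReR ImR unfolding p_def q_def by (auto simp: power2_eq_square)
  have p0: "p > 0"
  proof -
    have "p \<ge> 0" unfolding p_def S_def by (rule Re_csqrt)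
    moreover have "p \<noteq> 0"
    proof
      assume "p = 0"
      hence "X + q^2 = 0" using pq1 by simp
      moreover have "q^2 \<ge> 0" by simp
      ultimately show False using X0 by linarith
    qed
    ultimately show ?thesis by simp
  qed
  define m where "m = p^2 + q^2"
  have m0: "m \<ge> 0" unfolding m_def by simp
  have cS: "cmod S = sqrt m" unfolding m_def p_def q_def cmod_def ..
  have m2: "m^2 = X^2 + Y^2"
  proof -
    have "m^2 = (p^2 - q^2)^2 + (2*p*q)^2" unfolding m_def by (simp add: power2_eq_square algebra_simps)
    thus ?thesis using pq1 pq2 by simp
  qed
  have mX: "m \<ge> X"
  proof -
    have "X^2 \<le> m^2" using m2 by simp
    thus ?thesis using m0 by (meson abs_le_square_iff abs_ge_self order_trans power2_le_iff_abs_le)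
  qed
  have P1: "k * q < 0"
  proof -
    have "2*p*(k*q) = k*Y" using pq2 by (simp add: algebra_simps)
    also have "\<dots> = (a - b)*(2*k^2*\<alpha>)/N" unfolding Y2 v_def by (simp add: power2_eq_square algebra_simps)
    also have "\<dots> < 0" using assms Npos by (intro divide_neg_pos mult_neg_pos) auto
    finally show ?thesis using p0 by (simp add: mult_less_0_iff)
  qed
  have Xab: "X > a/b"
  proof -
    have "X*N*b = ((1 + a*u)*(1 + b*u) + a*v*(b*v))*b" using XN by simp
      also have "\<dots> = (a*N + (b-a)*(1+b*u))" unfolding N_def by (simp add: algebra_simps power2_eq_square)
      finally have "X*N*b = (a*N + (b-a)*(1+b*u))" .
    hence "X = a/b + (b-a)*(1+b*u)/(b*N)" using Npos assms(1,2) by (simp add: field_simps)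
    moreover have "(b-a)*(1+b*u)/(b*N) > 0" using c0 Npos assms(1,2) by simp
    ultimately show ?thesis by simp
  qed
  have P2a: "sqrt (a/b) < cmod S" unfolding cS using Xab mX by simp
  have fid: "(X^2 + Y^2) * N = (1 + a*u)^2 + (a*v)^2"
  proof -
    have "(X^2+Y^2)*N^2 = ((1 + a*u)*(1 + b*u) + a*v*(b*v))^2 + (a*v*(1 + b*u) - (1 + a*u)*(b*v))^2"
      unfolding X_def Y_def using Npos by (simp add: power2_eq_square field_simps)
    also have "\<dots> = ((1 + a*u)^2 + (a*v)^2) * N" unfolding N_def by (simp add: power2_eq_square algebra_simps)
    finally show ?thesis using Npos by (simp add: power2_eq_square)
  qed
  have v2: "v^2 = 4*s*t" unfolding v_def s_def t_def by (simp add: power2_eq_square)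
  have fa: "(1 + a*u)^2 + (a*v)^2 = (1-a*t)^2 + 2*a*s*(1+a*t) + a^2*s^2"
    unfolding u_def power_mult_distrib v2 by (simp add: power2_eq_square algebra_simps)
  have fb: "N = (1-b*t)^2 + 2*b*s*(1+b*t) + b^2*s^2"
    unfolding N_def u_def power_mult_distrib v2 by (simp add: power2_eq_square algebra_simps)
  have ineq1: "a*(1-b*t) < b*(1-a*t)" using assms(1,2) by (simp add: algebra_simps)
  have ineq2: "(1+a*t)*(1-b*t) < (1+b*t)*(1-a*t)" using at by (simp add: algebra_simps)
  have key: "((1-a*t)^2 + 2*a*s*(1+a*t) + a^2*s^2)*(1-b*t)^2 < N*(1-a*t)^2"
  proof -
    have g1: "a*(1+a*t)*(1-b*t)^2 < b*(1+b*t)*(1-a*t)^2"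
    proof -
      have "a*(1-b*t)*((1+a*t)*(1-b*t)) < b*(1-a*t)*((1+b*t)*(1-a*t))"
      proof -
        have h1: "0 < 1 + b*t" using t0 assms(1,2) by (simp add: add_pos_pos)
        have h2: "a*t < 1" using at bt by linarith
        show ?thesis
        using ineq1 ineq2 assms(1,2) bt h1 h2 t0
        by (intro mult_strict_mono) (auto intro!: mult_pos_pos)
      qed
      thus ?thesis by (simp add: power2_eq_square algebra_simps)
    qed
    have g2: "(a*(1-b*t))^2 < (b*(1-a*t))^2"
      using ineq1 assms(1) bt by (intro power_strict_mono) auto
    have "N*(1-a*t)^2 - ((1-a*t)^2 + 2*a*s*(1+a*t) + a^2*s^2)*(1-b*t)^2
       = 2*s*(b*(1+b*t)*(1-a*t)^2 - a*(1+a*t)*(1-b*t)^2) + s^2*((b*(1-a*t))^2 - (a*(1-b*t))^2)"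
      unfolding fb by (simp add: power2_eq_square algebra_simps)
    also have "\<dots> > 0" using g1 g2 s0 by (intro add_pos_pos) auto
    finally show ?thesis by simp
  qed
  have mL: "m < L"
  proof -
    have "m^2 * N * (1-b*t)^2 < N * (1-a*t)^2" using key m2 fid fa by simp
    hence "m^2 * (1-b*t)^2 < (1-a*t)^2" using Npos by (simp add: mult.assoc)
    hence "(m*(1-b*t))^2 < (1-a*t)^2" by (simp add: power_mult_distrib)
    moreover have "0 \<le> 1-a*t" using bt at by simp
    ultimately have "m*(1-b*t) < 1-a*t" by (rule power_less_imp_less_base)
    thus ?thesis unfolding L_def using bt by (simp add: less_divide_eq)
  qed
  have P2b: "cmod S < sqrt L" unfolding cS using mL by simp
  have P2c: "Shat a b (\<i> * of_real \<alpha>) = of_real (sqrt L)"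
  proof -
    have e: "(\<i> * of_real \<alpha>)^2 = - of_real t" unfolding t_def by (simp add: power_mult_distrib)
    have "(1 + of_real a * (\<i> * of_real \<alpha>)^2) / (1 + of_real b * (\<i> * of_real \<alpha>)^2) = (of_real L :: complex)"
      unfolding e L_def by simp
    thus ?thesis unfolding Shat_def using L0 by (simp add: csqrt_of_real)
  qed
  have P2d: "sqrt L < c"
  proof -
    have "sqrt L < sqrt (c^2)" using Lc by (rule real_sqrt_less_mono)
    moreover have "sqrt (c^2) = c" using assms(3) by simp
    ultimately show ?thesis by simp
  qed
  have mR: "m < a/b + (b-a)/(b*(1+b*u))"
  proof -
    define A where "A = a/b"
    define B where "B = (b-a)/b"
    define c1 where "c1 = 1 + b*u"
    have c1pp: "c1 > 0" unfolding c1_def using c0 .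
    have B0: "B > 0" unfolding B_def using assms(1,2) by simp
    have A0: "A > 0" unfolding A_def using assms(1,2) by simp
    have Xe: "X = A + B*c1/N"
    proof -
      have "X*N*b = ((1 + a*u)*(1 + b*u) + a*v*(b*v))*b" using XN by simp
      also have "\<dots> = (a*N + (b-a)*(1+b*u))" unfolding N_def by (simp add: algebra_simps power2_eq_square)
      finally have "X*N*b = (a*N + (b-a)*(1+b*u))" .
      thus ?thesis unfolding A_def B_def c1_def using Npos assms(1,2) by (simp add: field_simps)
    qed
    have Ye: "Y = - B*(b*v)/N" unfolding Y2 B_def using assms(1,2) Npos by (simp add: field_simps)
    have Nc: "N = c1^2 + (b*v)^2" unfolding N_def c1_def ..
    have "m^2 = A^2 + 2*A*B*c1/N + B^2*((c1^2 + (b*v)^2)/N^2)"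
      unfolding m2 Xe Ye using Npos by (simp add: power2_eq_square field_simps)
    also have "\<dots> = A^2 + 2*A*B*(c1/N) + B^2/N" unfolding Nc[symmetric] using Npos by (simp add: power2_eq_square)
    also have "\<dots> < A^2 + 2*A*B*(1/c1) + B^2/c1^2"
    proof -
      have c1p: "c1 > 0" unfolding c1_def using c0 .
      have Nc1: "N > c1^2" unfolding c1_def using N0 .
      have "c1/N < 1/c1" using c1p Nc1 Npos by (simp add: divide_less_eq field_simps power2_eq_square)
      hence h1: "2*A*B*(c1/N) < 2*A*B*(1/c1)" using A0 B0 by (intro mult_strict_left_mono) auto
      have "1/N < 1/c1^2" using c1p Nc1 by (simp add: frac_less2)
      hence "B^2*(1/N) < B^2*(1/c1^2)" using B0 by (intro mult_strict_left_mono) auto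
      hence h2: "B^2/N < B^2/c1^2" by simp
      show ?thesis using h1 h2 by linarith
    qed
    also have "\<dots> = (A + B/c1)^2" using c1pp by (simp add: power2_eq_square field_simps)
    finally have "m^2 < (A + B/c1)^2" .
    moreover have "0 \<le> A + B/c1" using A0 B0 c1pp by simp
    ultimately have "m < A + B/c1" by (rule power_less_imp_less_base)
    thus ?thesis unfolding A_def B_def c1_def by (simp add: field_simps)
  qed
  have P3: "cmod S < 1 - (1/2) * ((b - a) * (k\<^sup>2 - \<alpha>\<^sup>2)) / (1 + b * (k\<^sup>2 - \<alpha>\<^sup>2))"
  proof -
    have "sqrt m \<le> (1 + m)/2"
    proof -
      have "0 \<le> (sqrt m - 1)^2" by simp
      thus ?thesis using m0 by (simp add: power2_eq_square algebra_simps)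
    qed
    also have "\<dots> < (1 + (a/b + (b-a)/(b*(1+b*u))))/2" using mR by (intro divide_strict_right_mono add_strict_left_mono) auto
    also have "\<dots> = 1 - (1/2) * ((b - a) * u) / (1 + b * u)"
    proof -
      have n1: "1 + b*u \<noteq> 0" using c0 by simp
      have n2: "b \<noteq> 0" using assms(1,2) by simp
      show ?thesis using n1 n2 by (rule aux3[OF refl])
    qed
    finally show ?thesis unfolding cS u_def s_def t_def .
  qed
  define T where "T = - \<i> * \<xi> * S"
  have T2: "T^2 = - \<xi>\<^sup>2 * R" unfolding T_def using \<open>S^2 = R\<close> by (simp add: power_mult_distrib)
  have ReT: "Re T = \<alpha>*p + k*q" unfolding T_def \<xi>_def p_def q_def by simp
  have ReTpos: "Re T > 0"
  proof -
    have "2*p*Re T = \<alpha>*(2*p^2) + k*Y" unfolding ReT using pq2 by (simp add: power2_eq_square algebra_simps)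
    also have "2*p^2 = m + X" unfolding m_def using pq1 by simp
    finally have e: "2*p*Re T = \<alpha>*(m + X) + k*Y" .
    have kY: "k*Y = - (b-a)*(2*s*\<alpha>)/N" unfolding Y2 v_def s_def by (simp add: power2_eq_square algebra_simps)
    have "X*N - (b-a)*s = (1-a*t)*(1-b*t) + 2*a*s + a*b*(s^2 + 2*s*t)"
      unfolding XN u_def power_mult_distrib using v2 by (simp add: power2_eq_square algebra_simps)
    also have "\<dots> > 0"
    proof -
      have "a*t < 1" using at bt by linarith
      thus ?thesis using bt s0 t0 assms(1,2) by (intro add_pos_nonneg add_pos_pos mult_pos_pos) auto
    qed
    finally have "X > (b-a)*s/N" using Npos by (simp add: field_simps)
    hence "\<alpha>*(m+X) > \<alpha>*(2*((b-a)*s/N))" using mX assms(4) by (intro mult_strict_left_mono) auto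
    moreover have "k*Y = - (\<alpha>*(2*((b-a)*s/N)))" unfolding kY using Npos by (simp add: field_simps)
    ultimately have "\<alpha>*(m + X) + k*Y > 0" by linarith
    hence "2*p*Re T > 0" using e by simp
    thus ?thesis using p0 by (simp add: zero_less_mult_iff)
  qed
  have P4: "\<i> * \<xi> * S = - csqrt (- \<xi>\<^sup>2 * R)"
  proof -
    have "csqrt (- \<xi>\<^sup>2 * R) = T" using T2 ReTpos by (intro csqrt_unique) auto
    thus ?thesis unfolding T_def by simp
  qed
  show ?thesis unfolding SS
    using P1 P2a P2b P2c P2d P3 P4 L_def t_def R_def z_def w_def q_def by auto
qed

end
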